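(* For all $n$ and $m$, top-half approval is a $\frac{1}{3}$-expected-welfare-maximizing rule for every symmetric distribution $\mathcal{D}$ supported on $[0,1]$; that is, for every such $\mathcal{D}$ and every preference profile $\sigma$ on $n$ voters and $m$ alternatives, the alternative $f(\sigma)$ selected by top-half approval satisfies $\mathbb{E}[\mathrm{sw}(f(\sigma),u)]\ge\frac{1}{3}\max_{j\in A}\mathbb{E}[\mathrm{sw}(j,u)]$.
   Context: There are $n$ voters and $m$ alternatives $A=\{1,\dots,m\}$. A preference profile $\sigma$ consists of a ranking of $A$ for each voter. Given a distribution $\mathcal{D}$ and profile $\sigma$, a random utility profile $u$ consistent with $\sigma$ is generated as follows: independently for each voter $i$, draw $m$ i.i.d. samples from $\mathcal{D}$ and assign them, from highest to lowest, to the alternatives in the order of voter $i$'s ranking. The social welfare of $j$ is $\mathrm{sw}(j,u)=\sum_i u_{ij}$; expectations are over $u$. A distribution $\mathcal{D}$ on $[0,1]$ is symmetric if $\Pr_{x\sim\mathcal{D}}(x\le\frac12-\epsilon)=\Pr_{x\sim\mathcal{D}}(x\ge\frac12+\epsilon)$ for all $\epsilon\in[0,\frac12]$. Top-half approval is the scoring rule in which each voter gives $1$ point to each alternative in her top $\lceil m/2\rceil$ positions and $0$ to all others; it selects an alternative with the largest total score (ties broken arbitrarily). *)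

theory Defs
  imports "HOL-Probability.Probability"
begin

(* Alternatives A = {1..m}; positions 1..m (1 = top).
   A preference profile: sigma i k = the alternative voter i ranks at position k. *)
definition is_profile :: "nat \<Rightarrow> nat \<Rightarrow> (nat \<Rightarrow> nat \<Rightarrow> nat) \<Rightarrow> bool" where
  "is_profile n m \<sigma> \<longleftrightarrow> (\<forall>i<n. bij_betw (\<sigma> i) {1..m} {1..m})"

definition pos :: "nat \<Rightarrow> (nat \<Rightarrow> nat \<Rightarrow> nat) \<Rightarrow> nat \<Rightarrow> nat \<Rightarrow> nat" where
  "pos m \<sigma> i j = (THE k. k \<in> {1..m} \<and> \<sigma> i k = j)"

definition symmetric_dist :: "real measure \<Rightarrow> bool" where
  "symmetric_dist D \<longleftrightarrow> (\<forall>\<epsilon>\<in>{0..1/2}.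
      measure D {x. x \<le> 1/2 - \<epsilon>} = measure D {x. x \<ge> 1/2 + \<epsilon>})"

definition sample_space :: "nat \<Rightarrow> nat \<Rightarrow> real measure \<Rightarrow> (nat \<times> nat \<Rightarrow> real) measure" where
  "sample_space n m D = PiM ({..<n} \<times> {1..m}) (\<lambda>_. D)"

definition kth_highest :: "nat \<Rightarrow> (nat \<times> nat \<Rightarrow> real) \<Rightarrow> nat \<Rightarrow> nat \<Rightarrow> real" where
  "kth_highest m x i k = rev (sort (map (\<lambda>l. x (i, l)) [1..<m+1])) ! (k - 1)"

definition util :: "nat \<Rightarrow> (nat \<Rightarrow> nat \<Rightarrow> nat) \<Rightarrow> (nat \<times> nat \<Rightarrow> real) \<Rightarrow> nat \<Rightarrow> nat \<Rightarrow> real" where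
  "util m \<sigma> x i j = kth_highest m x i (pos m \<sigma> i j)"

definition sw :: "nat \<Rightarrow> nat \<Rightarrow> (nat \<Rightarrow> nat \<Rightarrow> nat) \<Rightarrow> nat \<Rightarrow> (nat \<times> nat \<Rightarrow> real) \<Rightarrow> real" where
  "sw n m \<sigma> j x = (\<Sum>i<n. util m \<sigma> x i j)"

definition expected_sw :: "nat \<Rightarrow> nat \<Rightarrow> real measure \<Rightarrow> (nat \<Rightarrow> nat \<Rightarrow> nat) \<Rightarrow> nat \<Rightarrow> real" where
  "expected_sw n m D \<sigma> j = (\<integral>x. sw n m \<sigma> j x \<partial>sample_space n m D)"

definition top_half_score :: "nat \<Rightarrow> nat \<Rightarrow> (nat \<Rightarrow> nat \<Rightarrow> nat) \<Rightarrow> nat \<Rightarrow> nat" where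
  "top_half_score n m \<sigma> j = card {i\<in>{..<n}. \<exists>k\<in>{1..nat \<lceil>real m / 2\<rceil>}. \<sigma> i k = j}"

definition top_half_winner :: "nat \<Rightarrow> nat \<Rightarrow> (nat \<Rightarrow> nat \<Rightarrow> nat) \<Rightarrow> nat \<Rightarrow> bool" where
  "top_half_winner n m \<sigma> w \<longleftrightarrow> w \<in> {1..m} \<and>
     (\<forall>j\<in>{1..m}. top_half_score n m \<sigma> j \<le> top_half_score n m \<sigma> w)"

end

theory Submission
  imports Defs
begin

lemma rsort_mono:
  fixes xs :: "real list"
  assumes "a \<le> b" "b < length xs"
  shows "rev (sort xs) ! b \<le> rev (sort xs) ! a"
proof -
  have s: "sorted (sort xs)" by simp
  have l: "length (sort xs) = length xs" by simp
  show ?thesis using assms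
    by (simp add: rev_nth sorted_nth_mono[OF s] l)
qed

lemma rsort_reflect:
  fixes xs :: "real list"
  assumes "1 \<le> k" "k \<le> length xs"
  shows "rev (sort (map (\<lambda>v. 1 - v) xs)) ! (k - 1) = 1 - rev (sort xs) ! (length xs - k)"
proof -
  have "sort (map (\<lambda>v. 1 - v) xs) = rev (map (\<lambda>v. 1 - v) (sort xs))"
  proof (rule properties_for_sort)
    show "mset (rev (map (\<lambda>v. 1 - v) (sort xs))) = mset (map (\<lambda>v. 1 - v) xs)"
      by simp
    show "sorted (rev (map (\<lambda>v. 1 - v) (sort xs)))"
      unfolding sorted_rev_iff_nth_mono by (auto simp: sorted_nth_mono)
  qed
  then show ?thesis using assms by (simp add: rev_nth)
qed

lemma rsort_count:
  fixes xs :: "real list"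
  assumes "1 \<le> k" "k \<le> length xs"
  shows "(c \<le> rev (sort xs) ! (k - 1)) \<longleftrightarrow> k \<le> length (filter (\<lambda>v. c \<le> v) xs)"
proof -
  define ys where "ys = rev (sort xs)"
  have ly: "length ys = length xs" by (simp add: ys_def)
  have "length (filter (\<lambda>v. c \<le> v) xs) = length (filter (\<lambda>v. c \<le> v) ys)"
    unfolding ys_def by (metis mset_filter size_mset mset_rev mset_sort)
  also have "\<dots> = card {p. p < length ys \<and> c \<le> ys ! p}" by (rule length_filter_conv_card)
  finally have cnt: "length (filter (\<lambda>v. c \<le> v) xs) = card {p. p < length ys \<and> c \<le> ys ! p}" .
  have mono: "\<And>a b. a \<le> b \<Longrightarrow> b < length ys \<Longrightarrow> ys ! b \<le> ys ! a"
    unfolding ys_def by (rule rsort_mono) (auto simp: ys_def)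
  show ?thesis
  proof
    assume h: "c \<le> rev (sort xs) ! (k - 1)"
    have "{..<k} \<subseteq> {p. p < length ys \<and> c \<le> ys ! p}"
    proof
      fix p assume "p \<in> {..<k}"
      then have "p \<le> k - 1" by auto
      then have "ys ! (k-1) \<le> ys ! p" using mono assms ly by auto
      then show "p \<in> {p. p < length ys \<and> c \<le> ys ! p}" using h \<open>p \<le> k-1\<close> assms ly ys_def by auto
    qed
    then have "card {..<k} \<le> card {p. p < length ys \<and> c \<le> ys ! p}"
      by (rule card_mono[rotated]) auto
    then show "k \<le> length (filter (\<lambda>v. c \<le> v) xs)" using cnt by simp
  next
    assume h: "k \<le> length (filter (\<lambda>v. c \<le> v) xs)"
    show "c \<le> rev (sort xs) ! (k - 1)"
    proof (rule ccontr)
      assume "\<not> ?thesis"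
      then have lt: "ys ! (k-1) < c" by (simp add: ys_def)
      have "{p. p < length ys \<and> c \<le> ys ! p} \<subseteq> {..<k-1}"
      proof
        fix p assume p: "p \<in> {p. p < length ys \<and> c \<le> ys ! p}"
        show "p \<in> {..<k-1}"
        proof (rule ccontr)
          assume "p \<notin> {..<k-1}"
          then have "ys ! p \<le> ys ! (k-1)" using mono p by auto
          then show False using p lt by auto
        qed
      qed
      then have "card {p. p < length ys \<and> c \<le> ys ! p} \<le> k - 1"
        by (metis card_lessThan card_mono finite_lessThan)
      then show False using h cnt assms by simp
    qed
  qed
qed

lemma D_reflect:
  fixes D :: "real measure"
  assumes P: "prob_space D" and S: "sets D = sets borel"
    and U: "measure D {0..1} = 1"
    and sym: "symmetric_dist D"
  shows "distr D D (\<lambda>x. 1 - x) = D"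
proof -
  interpret prob_space D by (rule P)
  have meas[measurable]: "(\<lambda>x::real. 1 - x) \<in> measurable D D"
    using S by (simp add: measurable_cong_sets[OF S S])
  have sp: "space D = UNIV" using S sets_eq_imp_space_eq by fastforce
  have sb: "\<And>A. A \<in> sets borel \<Longrightarrow> A \<in> sets D" using S by simp
  have out: "measure D A = 0" if "A \<in> sets borel" "A \<inter> {0..1} = {}" for A
  proof -
    have "measure D A + measure D {0..1} \<le> 1"
      using finite_measure_Union[of A "{0..1}"] that sb prob_le_1[of "A \<union> {0..1}"] by simp
    then show ?thesis using U by (simp add: measure_nonneg) (smt (verit) measure_nonneg)
  qed
  have key: "measure D {x. 1 - a \<le> x} = measure D {..a}" for a
  proof (cases "a < 0")
    case True
    have e: "{x. 1 - a \<le> x} = {1-a..}" by auto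
    have "measure D {1-a..} = 0" by (rule out) (use True in auto)
    moreover have "measure D {..a} = 0" by (rule out) (use True in auto)
    ultimately show ?thesis using e by simp
  next
    case False
    show ?thesis
    proof (cases "a \<le> 1/2")
      case True
      then have "1/2 - a \<in> {0..1/2}" using False by auto
      with sym have "measure D {x. x \<le> 1/2 - (1/2 - a)} = measure D {x. x \<ge> 1/2 + (1/2 - a)}"
        unfolding symmetric_dist_def by blast
      moreover have "{x. x \<le> 1/2 - (1/2 - a)} = {..a}" by auto
      moreover have "{x. 1/2 + (1/2-a) \<le> x} = {x. 1 - a \<le> x}" by auto
      ultimately show ?thesis by simp
    next
      case False2: False
      show ?thesis
      proof (cases "1 \<le> a")
        case True
        have e: "{x. 1 - a \<le> x} = {1-a..}" by auto
        have "measure D {0..1} \<le> measure D {1-a..}"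
          by (rule finite_measure_mono) (use True in \<open>auto intro: sb\<close>)
        then have "measure D {1-a..} = 1" using U prob_le_1[of "{1-a..}"] by linarith
        then have m1: "measure D {x. 1 - a \<le> x} = 1" using e by simp
        have "measure D {0..1} \<le> measure D {..a}"
          by (rule finite_measure_mono) (use True in \<open>auto intro: sb\<close>)
        then have m2: "measure D {..a} = 1" using U prob_le_1[of "{..a}"] by linarith
        show ?thesis using m1 m2 by simp
      next
        case False3: False
        define b where "b = 1 - a"
        have b: "0 < b" "b < 1/2" using False2 False3 b_def by auto
        define A where "A = (\<lambda>n::nat. {..b - b / (Suc n)})"
        define B where "B = (\<lambda>n::nat. {a + b / (Suc n)..})"
        have AB: "measure D (A n) = measure D (B n)" for n
        proof -
          have "b / Suc n \<le> b" using b by (simp add: divide_le_eq)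
          moreover have "0 \<le> b / Suc n" using b by simp
          ultimately have "1/2 - b + b / Suc n \<in> {0..1/2}" unfolding atLeastAtMost_iff using b by linarith
          with sym have "measure D {x. x \<le> 1/2 - (1/2 - b + b / Suc n)} =
              measure D {x. x \<ge> 1/2 + (1/2 - b + b / Suc n)}"
            unfolding symmetric_dist_def by blast
          moreover have "{x. x \<le> 1/2 - (1/2 - b + b / Suc n)} = A n" by (auto simp: A_def)
          moreover have "{x. x \<ge> 1/2 + (1/2 - b + b / Suc n)} = B n" by (auto simp: B_def b_def)
          ultimately show ?thesis by simp
        qed
        have bp: "0 < b / real (Suc n)" for n using b by simp
        have dm: "b / real (Suc (Suc n)) \<le> b / real (Suc n)" for n
          using divide_left_mono[of "real (Suc n)" "real (Suc (Suc n))" b] b by simp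
        have incA: "incseq A"
        proof (rule incseq_SucI)
          show "A n \<subseteq> A (Suc n)" for n using dm[of n] by (auto simp: A_def)
        qed
        have incB: "incseq B"
        proof (rule incseq_SucI)
          show "B n \<subseteq> B (Suc n)" for n using dm[of n] by (auto simp: B_def)
        qed
        have UA: "(\<Union>n. A n) = {..<b}"
        proof safe
          fix x n assume "x \<in> A n" then show "x < b" using bp[of n] unfolding A_def atMost_iff by linarith
        next
          fix x assume "x < b"
          obtain n0 where "b / (b - x) < real n0" using reals_Archimedean2 by blast
          then have n: "b / (b - x) < real (Suc n0)" by simp
          have pz: "0 < b - x" using \<open>x < b\<close> by simp
          have "b < real (Suc n0) * (b - x)" using n pos_divide_less_eq[OF pz] by (simp add: mult.commute)
          then have "b / real (Suc n0) < b - x" by (simp add: divide_less_eq mult.commute)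
          then have "x \<le> b - b / real (Suc n0)" by linarith
          then show "x \<in> (\<Union>n. A n)" unfolding A_def by blast
        qed
        have UB: "(\<Union>n. B n) = {a<..}"
        proof safe
          fix x n assume "x \<in> B n" then show "a < x" using bp[of n] unfolding B_def atLeast_iff by linarith
        next
          fix x assume "a < x"
          obtain n0 where "b / (x - a) < real n0" using reals_Archimedean2 by blast
          then have n: "b / (x - a) < real (Suc n0)" by simp
          have pz: "0 < x - a" using \<open>a < x\<close> by simp
          have "b < real (Suc n0) * (x - a)" using n pos_divide_less_eq[OF pz] by (simp add: mult.commute)
          then have "b / real (Suc n0) < x - a" by (simp add: divide_less_eq mult.commute)
          then have "a + b / real (Suc n0) \<le> x" by linarith
          then show "x \<in> (\<Union>n. B n)" unfolding B_def by blast
        qed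
        have mA: "range A \<subseteq> sets D" by (auto simp: A_def intro!: sb)
        have mB: "range B \<subseteq> sets D" by (auto simp: B_def intro!: sb)
        have "(\<lambda>n. measure D (A n)) \<longlonglongrightarrow> measure D {..<b}"
          using finite_Lim_measure_incseq[OF mA incA] UA by simp
        moreover have "(\<lambda>n. measure D (A n)) \<longlonglongrightarrow> measure D {a<..}"
          using finite_Lim_measure_incseq[OF mB incB] UB AB by simp
        ultimately have eq: "measure D {..<b} = measure D {a<..}" by (rule LIMSEQ_unique)
        have e1: "{x. b \<le> x} = space D - {..<b}" using sp by auto
        have e2: "{..a} = space D - {a<..}" using sp by auto
        have c1: "measure D {x. b \<le> x} = 1 - measure D {..<b}"
          unfolding e1 by (rule prob_compl) (rule sb, simp)
        have c2: "measure D {..a} = 1 - measure D {a<..}"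
          unfolding e2 by (rule prob_compl) (rule sb, simp)
        show ?thesis using c1 c2 eq b_def by simp
      qed
    qed
  qed
  have rd1: "real_distribution D" unfolding real_distribution_def real_distribution_axioms_def
    using P S by auto
  have rd2: "real_distribution (distr D D (\<lambda>x. 1 - x))" unfolding real_distribution_def real_distribution_axioms_def
    using S by (auto intro!: prob_space_distr)
  show ?thesis
  proof (rule cdf_unique[OF rd2 rd1])
    show "cdf (distr D D (\<lambda>x. 1 - x)) = cdf D"
    proof
      fix a
      have "cdf (distr D D (\<lambda>x. 1 - x)) a = measure D ((\<lambda>x. 1 - x) -` {..a} \<inter> space D)"
        unfolding cdf_def by (rule measure_distr) (auto intro: sb)
      also have "(\<lambda>x. 1 - x) -` {..a} \<inter> space D = {x. 1 - a \<le> x}" using sp by auto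
      finally show "cdf (distr D D (\<lambda>x. 1 - x)) a = cdf D a" using key unfolding cdf_def by simp
    qed
  qed
qed

lemma length_filter_sum:
  "real (length (filter P (map f ls))) = (\<Sum>l\<leftarrow>ls. if P (f l) then 1 else 0)"
  by (induction ls) auto

lemma kth_meas:
  fixes D :: "real measure"
  assumes S: "sets D = sets borel" and i: "i < n" and k: "1 \<le> k" "k \<le> m"
  shows "(\<lambda>x. kth_highest m x i k) \<in> borel_measurable (sample_space n m D)"
proof -
  let ?S = "sample_space n m D"
  have comp[measurable]: "(\<lambda>x. x (i, l)) \<in> borel_measurable ?S" if "l \<in> {1..m}" for l
  proof -
    have "(\<lambda>x. x (i, l)) \<in> measurable ?S D"
      unfolding sample_space_def by (rule measurable_component_singleton) (use i that in auto)
    then show ?thesis using measurable_cong_sets[OF refl S] by blast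
  qed
  have g: "(\<lambda>x. \<Sum>l\<in>{1..m}. if c \<le> x (i, l) then 1 else (0::real)) \<in> borel_measurable ?S" for c
    by (intro borel_measurable_sum) (auto intro!: comp)
  show ?thesis
    unfolding borel_measurable_iff_ge
  proof
    fix c
    have "{x \<in> space ?S. c \<le> kth_highest m x i k} =
          {x \<in> space ?S. real k \<le> (\<Sum>l\<in>{1..m}. if c \<le> x (i, l) then 1 else (0::real))}"
    proof -
      have "c \<le> kth_highest m x i k \<longleftrightarrow> real k \<le> (\<Sum>l\<in>{1..m}. if c \<le> x (i, l) then 1 else (0::real))" for x
      proof -
        have "c \<le> kth_highest m x i k \<longleftrightarrow> k \<le> length (filter (\<lambda>v. c \<le> v) (map (\<lambda>l. x (i, l)) [1..<m+1]))"
          unfolding kth_highest_def by (rule rsort_count) (use k in auto)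
        also have "\<dots> \<longleftrightarrow> real k \<le> real (length (filter (\<lambda>v. c \<le> v) (map (\<lambda>l. x (i, l)) [1..<m+1])))"
          by simp
        also have "real (length (filter (\<lambda>v. c \<le> v) (map (\<lambda>l. x (i, l)) [1..<m+1]))) =
            (\<Sum>l\<in>{1..m}. if c \<le> x (i, l) then 1 else (0::real))"
          unfolding length_filter_sum by (subst sum_list_distinct_conv_sum_set) (auto intro!: sum.cong)
        finally show ?thesis .
      qed
      then show ?thesis by simp
    qed
    also have "\<dots> \<in> sets ?S" using g[of c] by measurable
    finally show "{x \<in> space ?S. c \<le> kth_highest m x i k} \<in> sets ?S" .
  qed
qed

lemma S_prob: "prob_space D \<Longrightarrow> prob_space (sample_space n m D)"
  unfolding sample_space_def by (rule prob_space_PiM) auto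

lemma kth_AE:
  fixes D :: "real measure"
  assumes P: "prob_space D" and U: "measure D {0..1} = 1" and i: "i < n" and k: "1 \<le> k" "k \<le> m"
  shows "AE x in sample_space n m D. 0 \<le> kth_highest m x i k \<and> kth_highest m x i k \<le> 1"
proof -
  have ae: "AE v in D. v \<in> {0..1}" by (rule prob_space.AE_prob_1[OF P U])
  have "AE x in sample_space n m D. \<forall>p\<in>{..<n} \<times> {1..m}. x p \<in> {0..1}"
    unfolding sample_space_def
  proof (rule AE_finite_allI)
    fix p assume p: "p \<in> {..<n} \<times> {1..m}"
    show "AE x in Pi\<^sub>M ({..<n} \<times> {1..m}) (\<lambda>_. D). x p \<in> {0..1}"
      using AE_PiM_component[of "{..<n} \<times> {1..m}" "\<lambda>_. D" p "\<lambda>v. v \<in> {0..1}"] P p ae by blast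
  qed simp
  then show ?thesis
  proof (rule eventually_mono)
    fix x :: "nat \<times> nat \<Rightarrow> real" assume h: "\<forall>p\<in>{..<n} \<times> {1..m}. x p \<in> {0..1}"
    let ?xs = "map (\<lambda>l. x (i, l)) [1..<m+1]"
    have "kth_highest m x i k \<in> set (rev (sort ?xs))"
      unfolding kth_highest_def by (rule nth_mem) (use k in auto)
    then have "kth_highest m x i k \<in> set ?xs" by simp
    moreover have "set [1..<m+1] = {1..m}" by auto
    ultimately have "kth_highest m x i k \<in> (\<lambda>l. x (i, l)) ` {1..m}" by (metis set_map)
    then obtain l where "l \<in> {1..m}" "kth_highest m x i k = x (i, l)" by blast
    then show "0 \<le> kth_highest m x i k \<and> kth_highest m x i k \<le> 1" using h i by auto
  qed
qed

lemma kth_int: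
  fixes D :: "real measure"
  assumes P: "prob_space D" and S: "sets D = sets borel" and U: "measure D {0..1} = 1"
    and i: "i < n" and k: "1 \<le> k" "k \<le> m"
  shows "integrable (sample_space n m D) (\<lambda>x. kth_highest m x i k)"
proof -
  interpret SP: prob_space "sample_space n m D" by (rule S_prob[OF P])
  show ?thesis
  proof (rule Bochner_Integration.integrable_bound[OF SP.integrable_const[of "1::real"]])
    show "(\<lambda>x. kth_highest m x i k) \<in> borel_measurable (sample_space n m D)"
      by (rule kth_meas[OF S i k])
    show "AE x in sample_space n m D. norm (kth_highest m x i k) \<le> norm (1::real)"
      using kth_AE[OF P U i k] by (rule eventually_mono) auto
  qed
qed

lemma kth_reflect:
  fixes D :: "real measure"
  assumes P: "prob_space D" and S: "sets D = sets borel" and U: "measure D {0..1} = 1"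
    and sym: "symmetric_dist D"
    and i: "i < n" and k: "1 \<le> k" "k \<le> m"
  shows "(\<integral>x. kth_highest m x i k \<partial>sample_space n m D) =
         1 - (\<integral>x. kth_highest m x i (m + 1 - k) \<partial>sample_space n m D)"
proof -
  let ?I = "{..<n} \<times> {1..m}"
  let ?S = "sample_space n m D"
  let ?R = "compose ?I (\<lambda>v::real. 1 - v)"
  interpret SP: prob_space ?S by (rule S_prob[OF P])
  have fD[measurable]: "(\<lambda>v::real. 1 - v) \<in> measurable D D"
    by (simp add: measurable_cong_sets[OF S S])
  have pps: "product_prob_space (\<lambda>_::nat\<times>nat. D)" by (rule product_prob_spaceI) (rule P)
  have dS: "distr ?S ?S ?R = ?S"
    unfolding sample_space_def
    using distr_PiM_finite_prob_space[of ?I "\<lambda>_. D" "\<lambda>_. D" "\<lambda>v. 1 - v", OF _ pps pps fD]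
    D_reflect[OF P S U sym] by simp
  have Rm: "?R \<in> measurable ?S ?S"
    unfolding sample_space_def compose_def
  proof (rule measurable_restrict)
    fix p assume "p \<in> ?I"
    have "(\<lambda>x. x p) \<in> measurable (Pi\<^sub>M ?I (\<lambda>_. D)) D"
      by (rule measurable_component_singleton) fact
    then show "(\<lambda>x. 1 - x p) \<in> measurable (Pi\<^sub>M ?I (\<lambda>_. D)) D"
      using fD by (rule measurable_compose)
  qed
  have pw: "kth_highest m (?R x) i k = 1 - kth_highest m x i (m + 1 - k)" for x
  proof -
    define xs where "xs = map (\<lambda>l. x (i, l)) [1..<m+1]"
    have eq: "map (\<lambda>l. ?R x (i, l)) [1..<m+1] = map (\<lambda>v. 1 - v) xs"
      unfolding xs_def using i by (auto simp: compose_def)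
    have L: "length xs = m" unfolding xs_def by simp
    have mk: "m + 1 - k - 1 = m - k" by simp
    show ?thesis unfolding kth_highest_def eq xs_def[symmetric] mk
      using rsort_reflect[of k xs] k L by simp
  qed
  have "(\<integral>x. kth_highest m x i k \<partial>?S) = (\<integral>x. kth_highest m x i k \<partial>distr ?S ?S ?R)"
    using dS by simp
  also have "\<dots> = (\<integral>x. kth_highest m (?R x) i k \<partial>?S)"
    by (rule integral_distr[OF Rm kth_meas[OF S i k]])
  also have "\<dots> = (\<integral>x. 1 - kth_highest m x i (m + 1 - k) \<partial>?S)"
    unfolding pw ..
  also have "\<dots> = 1 - (\<integral>x. kth_highest m x i (m + 1 - k) \<partial>?S)"
  proof -
    have ii: "integrable ?S (\<lambda>x. kth_highest m x i (m + 1 - k))"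
      using kth_int[OF P S U i, of "m + 1 - k"] k by simp
    have "(\<integral>x. 1 - kth_highest m x i (m + 1 - k) \<partial>?S) =
        (\<integral>x. 1 \<partial>?S) - (\<integral>x. kth_highest m x i (m + 1 - k) \<partial>?S)"
      by (rule Bochner_Integration.integral_diff[OF SP.integrable_const ii])
    then show ?thesis using SP.prob_space by simp
  qed
  finally show ?thesis .
qed

lemma t_eq: "nat \<lceil>real m / 2\<rceil> = (m + 1) div 2"
proof (cases "even m")
  case True
  then obtain q where "m = 2 * q" by blast
  then show ?thesis by simp
next
  case False
  then obtain q where q: "m = 2 * q + 1" using oddE by blast
  have "\<lceil>real m / 2\<rceil> = int q + 1"
    unfolding q by (intro ceiling_unique) auto
  then show ?thesis using q by simp
qed

lemma card_filter_sum: "finite A \<Longrightarrow> card {x\<in>A. P x} = (\<Sum>x\<in>A. if P x then 1 else 0)"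
  by (simp add: sum.inter_filter[symmetric])

lemma card_filter_sum_real: "finite A \<Longrightarrow> real (card {x\<in>A. P x}) = (\<Sum>x\<in>A. if P x then 1 else (0::real))"
  by (simp add: card_filter_sum of_nat_sum if_distrib cong: if_cong)

lemma pos_props:
  assumes "is_profile n m \<sigma>" "i < n" "j \<in> {1..m}"
  shows "pos m \<sigma> i j \<in> {1..m} \<and> \<sigma> i (pos m \<sigma> i j) = j"
proof -
  have b: "bij_betw (\<sigma> i) {1..m} {1..m}" using assms unfolding is_profile_def by auto
  then obtain k where k: "k \<in> {1..m}" "\<sigma> i k = j" using assms(3) by (metis bij_betw_iff_bijections)
  have u: "\<exists>!k. k \<in> {1..m} \<and> \<sigma> i k = j"
  proof
    show "k \<in> {1..m} \<and> \<sigma> i k = j" using k by simp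
    fix k' assume "k' \<in> {1..m} \<and> \<sigma> i k' = j"
    then show "k' = k" using k b unfolding bij_betw_def inj_on_def by metis
  qed
  show ?thesis unfolding pos_def using theI'[OF u] .
qed

lemma top_iff:
  assumes "is_profile n m \<sigma>" "i < n" "j \<in> {1..m}" "t \<le> m"
  shows "(\<exists>k\<in>{1..t}. \<sigma> i k = j) \<longleftrightarrow> pos m \<sigma> i j \<le> t"
proof -
  have b: "inj_on (\<sigma> i) {1..m}" using assms unfolding is_profile_def bij_betw_def by auto
  have p: "pos m \<sigma> i j \<in> {1..m}" "\<sigma> i (pos m \<sigma> i j) = j" using pos_props[OF assms(1-3)] by auto
  show ?thesis
  proof
    assume "\<exists>k\<in>{1..t}. \<sigma> i k = j"
    then obtain k where k: "k \<in> {1..t}" "\<sigma> i k = j" by blast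
    have km: "k \<in> {1..m}" using k assms(4) by auto
    have "\<sigma> i k = \<sigma> i (pos m \<sigma> i j)" using k(2) p(2) by simp
    then have "k = pos m \<sigma> i j" using inj_onD[OF b _ km p(1)] by blast
    then show "pos m \<sigma> i j \<le> t" using k by simp
  next
    assume "pos m \<sigma> i j \<le> t"
    then show "\<exists>k\<in>{1..t}. \<sigma> i k = j" using p by auto
  qed
qed

lemma score_sum:
  assumes "is_profile n m \<sigma>" "t \<le> m"
  shows "(\<Sum>j\<in>{1..m}. card {i\<in>{..<n}. \<exists>k\<in>{1..t}. \<sigma> i k = j}) = n * t"
proof -
  have "(\<Sum>j\<in>{1..m}. card {i\<in>{..<n}. \<exists>k\<in>{1..t}. \<sigma> i k = j})
      = (\<Sum>j\<in>{1..m}. \<Sum>i<n. if (\<exists>k\<in>{1..t}. \<sigma> i k = j) then 1 else 0)"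
    by (rule sum.cong[OF refl], rule card_filter_sum) simp
  also have "\<dots> = (\<Sum>i<n. \<Sum>j\<in>{1..m}. if (\<exists>k\<in>{1..t}. \<sigma> i k = j) then 1 else 0)"
    by (rule sum.swap)
  also have "\<dots> = (\<Sum>i<n. card {j\<in>{1..m}. \<exists>k\<in>{1..t}. \<sigma> i k = j})"
    by (rule sum.cong[OF refl], rule card_filter_sum[symmetric]) simp
  also have "\<dots> = (\<Sum>i<n. t)"
  proof (rule sum.cong)
    fix i assume i: "i \<in> {..<n}"
    have b: "bij_betw (\<sigma> i) {1..m} {1..m}" using assms i unfolding is_profile_def by auto
    have "{j\<in>{1..m}. \<exists>k\<in>{1..t}. \<sigma> i k = j} = \<sigma> i ` {1..t}"
      using b assms(2) unfolding bij_betw_def by auto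
    moreover have "inj_on (\<sigma> i) {1..t}"
      using b assms(2) unfolding bij_betw_def by (auto intro: inj_on_subset)
    ultimately show "card {j\<in>{1..m}. \<exists>k\<in>{1..t}. \<sigma> i k = j} = t" by (simp add: card_image)
  qed simp
  finally show ?thesis by simp
qed

theorem theorem5:
  fixes n m :: nat and D :: "real measure" and \<sigma> :: "nat \<Rightarrow> nat \<Rightarrow> nat" and w :: nat
  assumes "prob_space D" and "sets D = sets borel"
    and "measure D {0..1} = 1"
    and "symmetric_dist D"
    and "is_profile n m \<sigma>"
    and "top_half_winner n m \<sigma> w"
  shows "expected_sw n m D \<sigma> w \<ge> (1/3) * (MAX j\<in>{1..m}. expected_sw n m D \<sigma> j)"
proof -
  note P = assms(1) and S = assms(2) and U = assms(3) and sym = assms(4) and prof = assms(5)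
  let ?S = "sample_space n m D"
  interpret SP: prob_space ?S by (rule S_prob[OF P])
  define t where "t = nat \<lceil>real m / 2\<rceil>"
  have t: "t = (m + 1) div 2" unfolding t_def by (rule t_eq)
  have w: "w \<in> {1..m}" "\<And>j. j \<in> {1..m} \<Longrightarrow> top_half_score n m \<sigma> j \<le> top_half_score n m \<sigma> w"
    using assms(6) unfolding top_half_winner_def by auto
  have m1: "1 \<le> m" using w by auto
  have tm: "t \<le> m" "m \<le> 2 * t" "2 * t \<le> m + 1" using t m1 by auto
  define mu where "mu i k = (\<integral>x. kth_highest m x i k \<partial>?S)" for i k
  have mu01: "0 \<le> mu i k \<and> mu i k \<le> 1" if "i < n" "1 \<le> k" "k \<le> m" for i k
  proof
    show "0 \<le> mu i k" unfolding mu_def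
      by (rule integral_nonneg_AE) (use kth_AE[OF P U that] in \<open>auto elim: eventually_mono\<close>)
    have "mu i k \<le> (\<integral>x. 1 \<partial>?S)" unfolding mu_def
      by (rule integral_mono_AE[OF kth_int[OF P S U that] SP.integrable_const])
         (use kth_AE[OF P U that] in \<open>auto elim: eventually_mono\<close>)
    then show "mu i k \<le> 1" using SP.prob_space by simp
  qed
  have mono: "mu i k2 \<le> mu i k1" if "i < n" "1 \<le> k1" "k1 \<le> k2" "k2 \<le> m" for i k1 k2
    unfolding mu_def
  proof (rule integral_mono[OF kth_int[OF P S U] kth_int[OF P S U]])
    fix x
    show "kth_highest m x i k2 \<le> kth_highest m x i k1"
      unfolding kth_highest_def by (rule rsort_mono) (use that in auto)
  qed (use that in auto)
  have refl: "mu i k = 1 - mu i (m + 1 - k)" if "i < n" "1 \<le> k" "k \<le> m" for i k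
    unfolding mu_def by (rule kth_reflect[OF P S U sym that])
  have hi: "1/2 \<le> mu i k" if "i < n" "1 \<le> k" "k \<le> t" for i k
  proof -
    have "mu i (m + 1 - k) \<le> mu i k" by (rule mono) (use that tm in auto)
    then show ?thesis using refl[of i k] that tm by simp
  qed
  have lo: "mu i k \<le> 1/2" if "i < n" "t < k" "k \<le> m" for i k
  proof -
    have "mu i k \<le> mu i (m + 1 - k)" by (rule mono) (use that tm in auto)
    then show ?thesis using refl[of i k] that tm by simp
  qed
  define top where "top i j \<longleftrightarrow> (\<exists>k\<in>{1..t}. \<sigma> i k = j)" for i j
  define s where "s j = top_half_score n m \<sigma> j" for j
  have s_def': "real (s j) = (\<Sum>i<n. if top i j then 1 else (0::real))" for j
    unfolding s_def top_half_score_def top_def t_def[symmetric]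
    by (rule card_filter_sum_real) simp
  have E: "expected_sw n m D \<sigma> j = (\<Sum>i<n. mu i (pos m \<sigma> i j))" if "j \<in> {1..m}" for j
    unfolding expected_sw_def sw_def util_def mu_def
  proof (rule Bochner_Integration.integral_sum)
    fix i assume "i \<in> {..<n}"
    then show "integrable ?S (\<lambda>x. kth_highest m x i (pos m \<sigma> i j))"
      using pos_props[OF prof _ that, of i] by (intro kth_int[OF P S U]) auto
  qed
  have top_pos: "top i j \<longleftrightarrow> pos m \<sigma> i j \<le> t" if "i < n" "j \<in> {1..m}" for i j
    unfolding top_def by (rule top_iff[OF prof that tm(1)])
  have Ew: "real (s w) / 2 \<le> expected_sw n m D \<sigma> w"
  proof -
    have "real (s w) / 2 = (\<Sum>i<n. if top i w then 1/2 else (0::real))"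
      unfolding s_def' sum_divide_distrib by (rule sum.cong) auto
    also have "\<dots> \<le> (\<Sum>i<n. mu i (pos m \<sigma> i w))"
    proof (rule sum_mono)
      fix i assume i: "i \<in> {..<n}"
      have p: "pos m \<sigma> i w \<in> {1..m}" using pos_props[OF prof _ w(1), of i] i by auto
      show "(if top i w then 1/2 else 0) \<le> mu i (pos m \<sigma> i w)"
        using hi[of i "pos m \<sigma> i w"] mu01[of i "pos m \<sigma> i w"] p i top_pos[of i w] w(1) by auto
    qed
    finally show ?thesis using E[OF w(1)] by simp
  qed
  have Ej: "expected_sw n m D \<sigma> j \<le> real n / 2 + real (s j) / 2" if j: "j \<in> {1..m}" for j
  proof -
    have "expected_sw n m D \<sigma> j = (\<Sum>i<n. mu i (pos m \<sigma> i j))" by (rule E[OF j])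
    also have "\<dots> \<le> (\<Sum>i<n. 1/2 + (if top i j then 1/2 else (0::real)))"
    proof (rule sum_mono)
      fix i assume i: "i \<in> {..<n}"
      have p: "pos m \<sigma> i j \<in> {1..m}" using pos_props[OF prof _ j, of i] i by auto
      show "mu i (pos m \<sigma> i j) \<le> 1/2 + (if top i j then 1/2 else 0)"
        using lo[of i "pos m \<sigma> i j"] mu01[of i "pos m \<sigma> i j"] p i top_pos[of i j] j by auto
    qed
    also have "\<dots> = real n / 2 + real (s j) / 2"
      unfolding sum.distrib s_def' sum_divide_distrib by (auto intro!: sum.cong)
    finally show ?thesis .
  qed
  have cnt: "n * t \<le> m * s w"
  proof -
    have "n * t = (\<Sum>j\<in>{1..m}. s j)"
      unfolding s_def top_half_score_def t_def[symmetric] using score_sum[OF prof tm(1)] by simp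
    also have "\<dots> \<le> (\<Sum>j\<in>{1..m}. s w)" by (rule sum_mono) (use w(2) s_def in auto)
    finally show ?thesis by simp
  qed
  have nsw: "real n \<le> 2 * real (s w)"
  proof -
    have "n * m \<le> n * (2 * t)" using tm by simp
    also have "\<dots> = 2 * (n * t)" by simp
    also have "\<dots> \<le> 2 * (m * s w)" using cnt by simp
    finally have "m * n \<le> m * (2 * s w)" by (simp add: mult.commute mult.left_commute)
    then have "n \<le> 2 * s w" using m1 by simp
    then show ?thesis by linarith
  qed
  have "(MAX j\<in>{1..m}. expected_sw n m D \<sigma> j) \<le> 3 * expected_sw n m D \<sigma> w"
  proof (rule Max.boundedI)
    show "finite (expected_sw n m D \<sigma> ` {1..m})" by simp
    show "expected_sw n m D \<sigma> ` {1..m} \<noteq> {}" using w by auto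
    fix a assume "a \<in> expected_sw n m D \<sigma> ` {1..m}"
    then obtain j where j: "j \<in> {1..m}" "a = expected_sw n m D \<sigma> j" by auto
    have "real (s j) \<le> real (s w)" using w(2)[OF j(1)] s_def by simp
    then show "a \<le> 3 * expected_sw n m D \<sigma> w" using Ej[OF j(1)] Ew nsw j(2) by linarith
  qed
  then show ?thesis by simp
qed

end
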